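(* Let $p\neq 3$ be a prime and let $C(x_1,\ldots,x_r)=a_1x_1^3+a_2x_2^3+\cdots+a_rx_r^3$ with $a_1,\ldots,a_r$ integers. Suppose there are indices $1\leq i<j<k\leq r$ with $a_ia_ja_k\neq 0$ and $\nu_p(a_i)\equiv\nu_p(a_j)\equiv\nu_p(a_k)\pmod 3$. Then $R(C)$ is dense in $\mathbb{Q}_p$.
   Context: For an integral form $F$ in $r$ variables, $R(F)=\{F(\overline{x})/F(\overline{y}):\overline{x},\overline{y}\in\mathbb{Z}^r,\ F(\overline{y})\neq 0\}$, viewed as a subset of the field $\mathbb{Q}_p$ of $p$-adic numbers with its $p$-adic topology. $\nu_p$ denotes the $p$-adic valuation. *)

theory Defs
  imports "HOL-Computational_Algebra.Computational_Algebra"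
begin

text \<open>p-adic valuation of a nonzero rational number: nu_p(a/b) = nu_p(a) - nu_p(b).
  (The value at 0 is irrelevant below; we always guard against it.)\<close>
definition padic_val_rat :: "nat \<Rightarrow> rat \<Rightarrow> int" where
  "padic_val_rat p q =
     (let (a, b) = quotient_of q in
        int (multiplicity (int p) a) - int (multiplicity (int p) b))"

definition diag_cubic :: "(nat \<Rightarrow> int) \<Rightarrow> nat \<Rightarrow> (nat \<Rightarrow> int) \<Rightarrow> int" where
  "diag_cubic a r x = (\<Sum>i = 1..r. a i * x i ^ 3)"

definition ratio_set :: "nat \<Rightarrow> ((nat \<Rightarrow> int) \<Rightarrow> int) \<Rightarrow> rat set" where
  "ratio_set r F = {of_int (F x) / of_int (F y) | x y.
      (\<forall>i. i \<notin> {1..r} \<longrightarrow> x i = 0) \<and> (\<forall>i. i \<notin> {1..r} \<longrightarrow> y i = 0) \<and> F y \<noteq> 0}"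

text \<open>A set S of rationals is dense in Q_p. Since Q is dense in Q_p, this holds iff every
  rational q is a p-adic limit of elements of S: for every bound n there is s in S with
  s = q or nu_p(s - q) >= n (i.e. |s - q|_p <= p^(-n)).\<close>
definition padic_dense :: "nat \<Rightarrow> rat set \<Rightarrow> bool" where
  "padic_dense p S \<longleftrightarrow>
     (\<forall>q :: rat. \<forall>n :: int. \<exists>s\<in>S. s = q \<or> padic_val_rat p (s - q) \<ge> n)"

end

theory Submission
  imports Defs "HOL-Number_Theory.Number_Theory"
begin


lemma three_dvd_prime: "prime (p::nat) \<Longrightarrow> 3 dvd p \<Longrightarrow> p = 3"
proof -
  assume p: "prime p" and d: "3 dvd p"
  have "(3::nat) = 1 \<or> 3 = p" using p[unfolded prime_nat_iff] d by blast
  then show "p = 3" by simp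
qed

lemma fermat_int:
  fixes c :: int assumes p: "prime p" and nd: "\<not> int p dvd c"
  shows "[c ^ (p - 1) = 1] (mod int p)"
proof -
  have pos: "int p > 0" using p prime_gt_0_nat by auto
  define c' where "c' = nat (c mod int p)"
  have c'e: "int c' = c mod int p" using pos unfolding c'_def by simp
  have "\<not> p dvd c'"
  proof
    assume "p dvd c'"
    then have "int p dvd int c'" by simp
    then have "int p dvd c mod int p" using c'e by simp
    then show False using nd by (simp add: dvd_mod_iff)
  qed
  then have "[c' ^ (p - 1) = 1] (mod p)" using fermat_theorem p by blast
  then have "[int c' ^ (p - 1) = 1] (mod int p)"
    by (metis cong_int_iff of_nat_1 of_nat_power)
  moreover have "[int c' = c] (mod int p)" using c'e by (simp add: cong_def)
  ultimately show ?thesis by (meson cong_pow cong_sym cong_trans)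
qed

lemma inv_mod_prime:
  fixes a :: int assumes p: "prime p" and nd: "\<not> int p dvd a"
  shows "\<exists>d. [a * d = 1] (mod int p)"
proof -
  have "prime (int p)" using p by (simp add: prime_nat_int_transfer)
  then have "coprime a (int p)" using nd
    by (meson prime_imp_coprime coprime_commute)
  then show ?thesis using cong_solve_coprime_int by blast
qed

lemma cube_root_easy:
  fixes c :: int assumes p: "prime p" and p3: "p mod 3 \<noteq> 1" "p \<noteq> 3"
  shows "\<exists>t. [t ^ 3 = c] (mod int p)"
proof -
  have p2: "p \<ge> 2" using p prime_ge_2_nat by blast
  have "p mod 3 = 2"
  proof -
    have "p mod 3 \<noteq> 0"
    proof
      assume "p mod 3 = 0"
      then have "3 dvd p" by auto
      then have "3 = p" using p three_dvd_prime by simp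
      then show False using p3 by simp
    qed
    then show ?thesis using p3 by presburger
  qed
  then obtain s where s: "3 * s = 2 * (p - 1) + 1" using p2
    by (intro that[of "(2 * p - 1) div 3"]) presburger
  show ?thesis
  proof (cases "int p dvd c")
    case True
    then show ?thesis by (intro exI[of _ 0]) (auto simp: cong_def dvd_eq_mod_eq_0)
  next
    case False
    have "[c ^ (p - 1) = 1] (mod int p)" using fermat_int p False by blast
    then have "[(c ^ (p - 1))^2 * c = 1^2 * c] (mod int p)" by (intro cong_mult cong_pow) auto
    moreover have "(c ^ s) ^ 3 = (c ^ (p - 1))^2 * c"
    proof -
      have "(c ^ s) ^ 3 = c ^ (3 * s)" by (simp add: power_mult[symmetric] mult.commute)
      also have "\<dots> = c ^ (2 * (p - 1) + 1)" using s by simp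
      also have "\<dots> = (c ^ (p - 1))^2 * c" by (metis power_add power_one_right power_mult mult.commute)
      finally show ?thesis .
    qed
    ultimately show ?thesis by (intro exI[of _ "c^s"]) simp
  qed
qed



lemma prime_int_p: "prime p \<Longrightarrow> prime (int p)" by (simp add: prime_nat_int_transfer)

lemma unit_mult: "prime p \<Longrightarrow> \<not> int p dvd a \<Longrightarrow> \<not> int p dvd b \<Longrightarrow> \<not> int p dvd (a * b)"
  using prime_int_p prime_dvd_mult_iff by blast

lemma unit_pow: "prime p \<Longrightarrow> \<not> int p dvd a \<Longrightarrow> \<not> int p dvd (a ^ n)"
  using prime_int_p prime_dvd_power by blast

lemma cong_subst: "[a = b] (mod m) \<Longrightarrow> a = a' \<Longrightarrow> b = b' \<Longrightarrow> [a' = b'] (mod m)"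
  by simp

lemma unit_cancel: "prime p \<Longrightarrow> \<not> int p dvd k \<Longrightarrow> [k * a = k * b] (mod int p) \<Longrightarrow> [a = b] (mod int p)"
  by (meson cong_mult_lcancel coprime_commute prime_imp_coprime prime_int_p)

context
  fixes p :: nat and g :: int
  assumes p: "prime p" and gnd: "\<not> int p dvd g"
    and cover: "\<And>v. \<not> int p dvd v \<Longrightarrow> \<exists>l<3. \<exists>t. [v = g^l * t^3] (mod int p)"
    and noncube: "\<not>(\<exists>t. [g = t^3] (mod int p))"
begin

definition memb :: "nat \<Rightarrow> int \<Rightarrow> bool" where
  "memb l v \<longleftrightarrow> \<not> int p dvd v \<and> (\<exists>t. [v = g^l * t^3] (mod int p))"

lemma memb_t: assumes "memb l v" obtains t where "\<not> int p dvd t" "[v = g^l * t^3] (mod int p)"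
proof -
  from assms obtain t where nd: "\<not> int p dvd v" and c: "[v = g^l * t^3] (mod int p)"
    unfolding memb_def by blast
  have "\<not> int p dvd t"
  proof
    assume "int p dvd t"
    then have "int p dvd g^l * t^3" by (intro dvd_mult) (simp add: power3_eq_cube)
    then have "int p dvd v" using c cong_dvd_iff by blast
    then show False using nd by simp
  qed
  then show ?thesis using that c by blast
qed

lemma memb_cong: "memb l u \<Longrightarrow> [u = v] (mod int p) \<Longrightarrow> memb l v"
  unfolding memb_def by (meson cong_dvd_iff cong_sym cong_trans)

lemma memb_mult: assumes "memb l u" "memb l' v" shows "memb ((l + l') mod 3) (u * v)"
proof -
  obtain t where t: "\<not> int p dvd t" "[u = g^l * t^3] (mod int p)" using memb_t assms(1) by blast
  obtain s where s: "\<not> int p dvd s" "[v = g^l' * s^3] (mod int p)" using memb_t assms(2) by blast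
  have nd: "\<not> int p dvd (u * v)" using assms p unit_mult unfolding memb_def by blast
  have c: "[u * v = g^(l+l') * (t*s)^3] (mod int p)"
  proof -
    have "[u * v = (g^l * t^3) * (g^l' * s^3)] (mod int p)" using t s cong_mult by blast
    then show ?thesis by (simp add: power_add power_mult_distrib mult_ac)
  qed
  have "g^(l+l') * (t*s)^3 = g^((l+l') mod 3) * (g^((l+l') div 3) * t * s)^3"
  proof -
    have "g^(l+l') = g^((l+l') mod 3) * (g^((l+l') div 3))^3"
      by (metis mod_div_mult_eq power_add power_mult mult.commute)
    then show ?thesis by (simp add: power_mult_distrib mult_ac)
  qed
  then show ?thesis using nd c unfolding memb_def by metis
qed

lemma memb_cube: "\<not> int p dvd t \<Longrightarrow> memb 0 (t^3)"
  unfolding memb_def using unit_pow[OF p] by (auto intro!: exI[of _ t])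

lemma memb_one: "memb 0 1" using memb_cube[of 1] p by (cases "p = 1") auto

lemma memb_m1: "memb 0 (-1)" using memb_cube[of "-1"] p by (cases "p = 1") auto

lemma memb_g: "memb 1 g" unfolding memb_def using gnd
  by (intro conjI exI[of _ 1]) auto

lemma memb_cover: "\<not> int p dvd v \<Longrightarrow> \<exists>l<3. memb l v"
  using cover unfolding memb_def by blast

lemma memb_nd: "memb l v \<Longrightarrow> \<not> int p dvd v" unfolding memb_def by blast

lemma g2_noncube: "\<not>(\<exists>t. [g^2 = t^3] (mod int p))"
proof
  assume "\<exists>t. [g^2 = t^3] (mod int p)"
  then obtain w where w: "[g^2 = w^3] (mod int p)" by blast
  have "\<not> int p dvd w"
  proof
    assume "int p dvd w"
    then have "int p dvd w^3" by (simp add: power3_eq_cube)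
    then have "int p dvd g^2" using cong_dvd_iff[OF w] by blast
    then show False using gnd unit_pow[OF p] by blast
  qed
  then obtain w' where w': "[w * w' = 1] (mod int p)" using inv_mod_prime p by blast
  have c0: "[g * (w*w')^3 = g * 1^3] (mod int p)" using w' by (intro cong_mult cong_pow) auto
  have c1: "[g = g * w^3 * w'^3] (mod int p)"
    using cong_subst[OF cong_sym[OF c0]] by (simp add: power_mult_distrib mult.assoc)
  have c2: "[g * w^3 * w'^3 = g * g^2 * w'^3] (mod int p)"
    using w by (intro cong_mult cong_refl) (rule cong_sym)
  have "[g = (g * w')^3] (mod int p)"
    using cong_subst[OF cong_trans[OF c1 c2]] by (simp add: power_mult_distrib power2_eq_square power3_eq_cube)
  then show False using noncube by blast
qed

lemma memb_lt: assumes "memb l v" "memb l' v" "l < l'" "l' < 3" shows False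
proof -
  obtain t where t: "\<not> int p dvd t" "[v = g^l * t^3] (mod int p)" using memb_t assms(1) by blast
  obtain s where s: "\<not> int p dvd s" "[v = g^l' * s^3] (mod int p)" using memb_t assms(2) by blast
  define d where "d = l' - l"
  have l': "l' = l + d" and d: "d = 1 \<or> d = 2" using assms d_def by auto
  have "[g^l * t^3 = g^l' * s^3] (mod int p)" using cong_trans[OF cong_sym[OF t(2)] s(2)] .
  then have "[g^l * t^3 = g^l * (g^d * s^3)] (mod int p)"
    using cong_subst by (simp add: l' power_add mult.assoc)
  then have ts: "[t^3 = g^d * s^3] (mod int p)" using unit_cancel[OF p] unit_pow[OF p gnd] by blast
  obtain s' where s': "[s * s' = 1] (mod int p)" using inv_mod_prime p s(1) by blast
  have c0: "[g^d * (s*s')^3 = g^d * 1^3] (mod int p)" using s' by (intro cong_mult cong_pow) auto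
  have c1: "[g^d = (g^d * s^3) * s'^3] (mod int p)"
    using cong_subst[OF cong_sym[OF c0]] by (simp add: power_mult_distrib mult.assoc)
  have c2: "[(g^d * s^3) * s'^3 = t^3 * s'^3] (mod int p)"
    using ts by (intro cong_mult cong_refl) (rule cong_sym)
  have "[g^d = (t * s')^3] (mod int p)"
    using cong_subst[OF cong_trans[OF c1 c2]] by (simp add: power_mult_distrib)
  then show False using d noncube g2_noncube by auto
qed

lemma memb_unique: assumes "memb l v" "memb l' v" "l < 3" "l' < 3" shows "l = l'"
proof (rule ccontr)
  assume "l \<noteq> l'"
  then have "l < l' \<or> l' < l" by arith
  then show False using memb_lt assms by blast
qed

lemma memb_same: assumes "memb l v" "memb l w" shows "\<exists>u. [v = w * u^3] (mod int p)"
proof -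
  obtain t where t: "\<not> int p dvd t" "[v = g^l * t^3] (mod int p)" using memb_t assms(1) by blast
  obtain s where s: "\<not> int p dvd s" "[w = g^l * s^3] (mod int p)" using memb_t assms(2) by blast
  obtain s' where s': "[s * s' = 1] (mod int p)" using inv_mod_prime p s(1) by blast
  have c0: "[g^l * t^3 * (s*s')^3 = g^l * t^3 * 1^3] (mod int p)" using s' by (intro cong_mult cong_pow) auto
  have c1: "[g^l * t^3 = g^l * s^3 * (t*s')^3] (mod int p)"
    using cong_subst[OF cong_sym[OF c0]] by (simp add: power_mult_distrib mult_ac)
  have c2: "[g^l * s^3 * (t*s')^3 = w * (t*s')^3] (mod int p)"
    using s by (intro cong_mult cong_refl) (rule cong_sym)
  show ?thesis using cong_trans[OF cong_trans[OF t(2) c1] c2] by blast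
qed


lemma P_eq: "v \<in> {0..<int p} \<Longrightarrow> w \<in> {0..<int p} \<Longrightarrow> [v = w] (mod int p) \<Longrightarrow> v = w"
  by (simp add: cong_def)

lemma mod_in_P: "x mod int p \<in> {0..<int p}"
  using p prime_gt_0_nat by auto

lemma card_map_le:
  assumes "finite B" "\<And>v. v \<in> A \<Longrightarrow> f v mod int p \<in> B"
    "\<And>v w. v \<in> A \<Longrightarrow> w \<in> A \<Longrightarrow> [f v = f w] (mod int p) \<Longrightarrow> v = w"
  shows "card A \<le> card B"
proof -
  have "inj_on (\<lambda>v. f v mod int p) A" using assms(3) unfolding inj_on_def cong_def by blast
  then show ?thesis using assms(1,2) by (intro card_inj_on_le[where f="\<lambda>v. f v mod int p"]) auto
qed

lemma inv_pow: assumes "\<not> int p dvd v" shows "[v * v^(p-2) = 1] (mod int p)"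
proof -
  have "p \<ge> 2" using p prime_ge_2_nat by blast
  then have "v * v^(p-2) = v^(p-1)" by (metis Suc_diff_Suc Suc_1 Suc_le_lessD diff_Suc_Suc power_Suc)
  then show ?thesis using fermat_int[OF p assms] by simp
qed

lemma memb_inv: assumes "memb 1 v" "[v * u = 1] (mod int p)" shows "memb 2 u"
proof -
  have "\<not> int p dvd u"
  proof
    assume "int p dvd u"
    then have "int p dvd v * u" by simp
    then have "int p dvd 1" using assms(2) cong_dvd_iff by blast
    then show False using p by (cases "p = 1") auto
  qed
  then obtain l where l: "l < 3" "memb l u" using memb_cover by blast
  have "memb ((1 + l) mod 3) (v * u)" using memb_mult assms(1) l(2) by blast
  moreover have "memb 0 (v * u)" using memb_cong memb_one assms(2) cong_sym by blast
  ultimately have "(1 + l) mod 3 = 0" using memb_unique by simp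
  then have "l = 2" using l(1) by presburger
  then show ?thesis using l by simp
qed

lemma exists_12: "\<exists>v. memb 1 v \<and> memb 2 (1 + v)"
proof (rule ccontr)
  assume H: "\<not> (\<exists>v. memb 1 v \<and> memb 2 (1 + v))"
  define P where "P = {0..<int p}"
  define C0 where "C0 = {v\<in>P. memb 0 v}"
  define C1 where "C1 = {v\<in>P. memb 1 v}"
  define S11 where "S11 = {v\<in>P. memb 1 v \<and> memb 1 (1+v)}"
  define A10 where "A10 = {v\<in>P. memb 1 v \<and> memb 0 (1+v)}"
  define A20 where "A20 = {v\<in>P. memb 2 v \<and> memb 0 (1+v)}"
  define T1 where "T1 = {v\<in>P. memb 0 v \<and> memb 1 (1+v)}"
  define T2 where "T2 = {v\<in>P. memb 0 v \<and> memb 2 (1+v)}"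
  have finP: "finite P" unfolding P_def by simp
  have fin: "finite C0" "finite C1" "finite S11" "finite A10" "finite A20" "finite T1" "finite T2"
    unfolding C0_def C1_def S11_def A10_def A20_def T1_def T2_def using finP by auto
  have step1: "memb 0 (1+v) \<or> memb 1 (1+v)" if "memb 1 v" for v
  proof -
    have "\<not> int p dvd (1 + v)"
    proof
      assume "int p dvd (1 + v)"
      then have "int p dvd -(1 + v)" by (simp only: dvd_minus_iff)
      then have "[-1 = v] (mod int p)" by (simp add: cong_iff_dvd_diff)
      then have "memb 0 v" using memb_cong memb_m1 by blast
      then show False using memb_unique that by fastforce
    qed
    then obtain l where "l < 3" "memb l (1+v)" using memb_cover by blast
    moreover have "l \<noteq> 2" using H that \<open>memb l (1+v)\<close> by blast
    ultimately have "l = 0 \<or> l = 1" by arith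
    then show ?thesis using \<open>memb l (1+v)\<close> by blast
  qed
  have "C1 = S11 \<union> A10" unfolding C1_def S11_def A10_def using step1 by blast
  moreover have "S11 \<inter> A10 = {}"
  proof -
    { fix v assume "v \<in> S11" "v \<in> A10"
      then have "memb 1 (1+v)" "memb 0 (1+v)" unfolding S11_def A10_def by auto
      then have False using memb_unique[of 1 "1+v" 0] by simp }
    then show ?thesis by blast
  qed
  ultimately have e1: "card C1 = card S11 + card A10" using fin by (simp add: card_Un_disjoint)
  have e2: "card S11 \<le> card A20"
  proof (rule card_map_le[where f="\<lambda>v. v^(p-2)"])
    show "finite A20" using fin by simp
  next
    fix v assume v: "v \<in> S11"
    define u where "u = v^(p-2) mod int p"
    have vu: "[v * u = 1] (mod int p)"
    proof -
      have "[v * u = v * v^(p-2)] (mod int p)" unfolding u_def by (intro cong_mult) (auto simp: cong_def)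
      moreover have "\<not> int p dvd v" using v memb_nd unfolding S11_def by blast
      ultimately show ?thesis using cong_trans inv_pow by blast
    qed
    have m2: "memb 2 u" using memb_inv vu v unfolding S11_def by blast
    have "memb ((1 + 2) mod 3) ((1 + v) * u)" using memb_mult m2 v unfolding S11_def by blast
    moreover have "[(1 + v) * u = 1 + u] (mod int p)"
      using cong_subst[OF cong_add[OF cong_refl[of u] vu]] by (simp add: algebra_simps)
    ultimately have "memb 0 (1 + u)" using memb_cong by simp
    then show "v^(p-2) mod int p \<in> A20" unfolding A20_def P_def using m2 mod_in_P u_def by simp
  next
    fix v w assume v: "v \<in> S11" and w: "w \<in> S11" and c: "[v^(p-2) = w^(p-2)] (mod int p)"
    have vn: "\<not> int p dvd v" and wn: "\<not> int p dvd w" using v w memb_nd unfolding S11_def by auto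
    have "[v = v * (w * w^(p-2))] (mod int p)"
      using cong_subst[OF cong_sym[OF cong_mult[OF cong_refl[of v] inv_pow[OF wn]]]] by simp
    also have "[v * (w * w^(p-2)) = v * (w * v^(p-2))] (mod int p)"
      using c by (intro cong_mult cong_refl) (rule cong_sym)
    also have "v * (w * v^(p-2)) = w * (v * v^(p-2))" by (simp add: mult_ac)
    also have "[w * (v * v^(p-2)) = w * 1] (mod int p)" using inv_pow[OF vn] by (intro cong_mult cong_refl)
    finally show "v = w" using P_eq v w unfolding S11_def P_def by simp
  qed
  have e3: "card A10 \<le> card T1"
  proof (rule card_map_le[where f="\<lambda>v. -1-v"])
    show "finite T1" using fin by simp
  next
    fix v assume v: "v \<in> A10"
    define u where "u = (-1-v) mod int p"
    have cu: "[u = (-1) * (1+v)] (mod int p)" unfolding u_def by (simp add: cong_def)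
    have "memb ((0+0) mod 3) ((-1) * (1+v))" using memb_mult memb_m1 v unfolding A10_def by blast
    then have m0: "memb 0 u" using memb_cong[OF _ cong_sym[OF cu]] by simp
    have cu': "[u = -1-v] (mod int p)" unfolding u_def by (simp add: cong_def)
    have c1: "[1 + u = (-1) * v] (mod int p)" using cong_subst[OF cong_add[OF cong_refl[of 1] cu']] by simp
    have "memb ((0+1) mod 3) ((-1) * v)" using memb_mult memb_m1 v unfolding A10_def by blast
    then have "memb 1 (1 + u)" using memb_cong[OF _ cong_sym[OF c1]] by simp
    then show "(-1-v) mod int p \<in> T1" unfolding T1_def P_def using m0 mod_in_P u_def by simp
  next
    fix v w assume v: "v \<in> A10" and w: "w \<in> A10" and c: "[-1-v = -1-w] (mod int p)"
    then have "[v = w] (mod int p)"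
      using cong_subst[OF cong_diff[OF cong_refl[of "-1"] c]] by simp
    then show "v = w" using P_eq v w unfolding A10_def P_def by simp
  qed
  have e4: "card A20 \<le> card T2"
  proof (rule card_map_le[where f="\<lambda>v. -1-v"])
    show "finite T2" using fin by simp
  next
    fix v assume v: "v \<in> A20"
    define u where "u = (-1-v) mod int p"
    have cu: "[u = (-1) * (1+v)] (mod int p)" unfolding u_def by (simp add: cong_def)
    have "memb ((0+0) mod 3) ((-1) * (1+v))" using memb_mult memb_m1 v unfolding A20_def by blast
    then have m0: "memb 0 u" using memb_cong[OF _ cong_sym[OF cu]] by simp
    have cu': "[u = -1-v] (mod int p)" unfolding u_def by (simp add: cong_def)
    have c1: "[1 + u = (-1) * v] (mod int p)" using cong_subst[OF cong_add[OF cong_refl[of 1] cu']] by simp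
    have "memb ((0+2) mod 3) ((-1) * v)" using memb_mult memb_m1 v unfolding A20_def by blast
    then have "memb 2 (1 + u)" using memb_cong[OF _ cong_sym[OF c1]] by (simp add: numeral_2_eq_2)
    then show "(-1-v) mod int p \<in> T2" unfolding T2_def P_def using m0 mod_in_P u_def by simp
  next
    fix v w assume v: "v \<in> A20" and w: "w \<in> A20" and c: "[-1-v = -1-w] (mod int p)"
    then have "[v = w] (mod int p)"
      using cong_subst[OF cong_diff[OF cong_refl[of "-1"] c]] by simp
    then show "v = w" using P_eq v w unfolding A20_def P_def by simp
  qed
  have pm1: "int p - 1 \<in> C0"
  proof -
    have "[-1 = int p - 1] (mod int p)" by (simp add: cong_def)
    then have "memb 0 (int p - 1)" using memb_cong memb_m1 by blast
    moreover have "int p - 1 \<in> P" unfolding P_def using p prime_gt_0_nat by auto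
    ultimately show ?thesis unfolding C0_def by simp
  qed
  have "T1 \<union> T2 \<subseteq> C0 - {int p - 1}"
  proof -
    have "\<not> memb l (1 + (int p - 1))" for l unfolding memb_def by simp
    then show ?thesis unfolding T1_def T2_def C0_def by auto
  qed
  moreover have "T1 \<inter> T2 = {}"
  proof -
    { fix v assume "v \<in> T1" "v \<in> T2"
      then have "memb 1 (1+v)" "memb 2 (1+v)" unfolding T1_def T2_def by auto
      then have False using memb_unique[of 1 "1+v" 2] by simp }
    then show ?thesis by blast
  qed
  ultimately have "card T1 + card T2 \<le> card (C0 - {int p - 1})"
    using fin card_Un_disjoint[of T1 T2] card_mono[of "C0 - {int p - 1}" "T1 \<union> T2"] by simp
  also have "\<dots> = card C0 - 1" using pm1 fin by simp
  finally have e5a: "card T1 + card T2 \<le> card C0 - 1" .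
  have "card C0 > 0" using pm1 fin(1) card_gt_0_iff by blast
  then have e5: "card T1 + card T2 < card C0" using e5a by linarith
  have e6: "card C0 \<le> card C1"
  proof (rule card_map_le[where f="\<lambda>v. g * v"])
    show "finite C1" using fin by simp
  next
    fix v assume v: "v \<in> C0"
    have "memb ((1+0) mod 3) (g * v)" using memb_mult memb_g v unfolding C0_def by blast
    moreover have "[g * v = g * v mod int p] (mod int p)" by (simp add: cong_def)
    ultimately have "memb 1 (g * v mod int p)" using memb_cong by simp
    then show "g * v mod int p \<in> C1" unfolding C1_def P_def using mod_in_P by simp
  next
    fix v w assume v: "v \<in> C0" and w: "w \<in> C0" and c: "[g * v = g * w] (mod int p)"
    then have "[v = w] (mod int p)" using unit_cancel[OF p gnd] by blast
    then show "v = w" using P_eq v w unfolding C0_def P_def by simp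
  qed
  show False using e1 e2 e3 e4 e5 e6 by linarith
qed

end



lemma not_p_dvd_3: "prime p \<Longrightarrow> p \<noteq> 3 \<Longrightarrow> \<not> int p dvd 3"
proof
  assume p: "prime p" "p \<noteq> 3" and d: "int p dvd 3"
  then have "p dvd 3" by (metis int_dvd_int_iff of_nat_numeral)
  moreover have "p \<le> 3" using dvd_imp_le[OF \<open>p dvd 3\<close>] by simp
  moreover have "p \<ge> 2" using prime_ge_2_nat p(1) by blast
  ultimately have "p = 2 \<or> p = 3" by auto
  then show False using p \<open>p dvd 3\<close> by auto
qed

lemma primroot_setup:
  assumes p: "prime p" and p1: "p mod 3 = 1"
  obtains G :: int where "\<not> int p dvd G"
    "\<And>v. \<not> int p dvd v \<Longrightarrow> \<exists>l<3. \<exists>t. [v = G^l * t^3] (mod int p)"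
    "\<not>(\<exists>t. [G = t^3] (mod int p))"
proof -
  have p1': "p > 1" using p prime_gt_1_nat by blast
  obtain g where g: "residue_primroot p g" using prime_primitive_root_exists p p1' by blast
  have cop: "coprime p g" and ordg: "ord p g = p - 1"
    using g p by (auto simp: residue_primroot_def totient_prime)
  have bij: "bij_betw (\<lambda>i. g ^ i mod p) {..<totient p} (totatives p)"
    using residue_primroot_is_generator p1' g by blast
  have gnd: "\<not> int p dvd int g"
  proof
    assume "int p dvd int g"
    then have "p dvd g" by simp
    then have "p dvd gcd p g" by simp
    then show False using cop p1' by simp
  qed
  have cover: "\<exists>l<3. \<exists>t. [v = int g^l * t^3] (mod int p)" if v: "\<not> int p dvd v" for v
  proof -
    define w where "w = nat (v mod int p)"
    have we: "int w = v mod int p" unfolding w_def using p1' by simp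
    have "w \<in> totatives p"
    proof -
      have "w > 0"
      proof (rule ccontr)
        assume "\<not> w > 0"
        then have "v mod int p = 0" using we by simp
        then show False using v by (simp add: dvd_eq_mod_eq_0)
      qed
      moreover have "w \<le> p"
      proof -
        have "int w < int p" using we p1' by simp
        then show ?thesis by simp
      qed
      moreover have "coprime w p"
      proof -
        have "\<not> p dvd w"
        proof
          assume "p dvd w"
          then have "int p dvd v mod int p" using we by (metis int_dvd_int_iff)
          then show False using v by (simp add: dvd_mod_iff)
        qed
        then show ?thesis using p by (simp add: prime_imp_coprime coprime_commute)
      qed
      ultimately show ?thesis by (simp add: totatives_def)
    qed
    then have "w \<in> (\<lambda>i. g ^ i mod p) ` {..<totient p}" using bij by (simp add: bij_betw_def)
    then obtain i where "g ^ i mod p = w" by blast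
    then have "[int g ^ i = v] (mod int p)"
      using we by (simp add: cong_def flip: of_nat_mod of_nat_power) 
    moreover have "int g ^ i = int g ^ (i mod 3) * (int g ^ (i div 3))^3"
      by (metis mod_div_mult_eq power_add power_mult mult.commute)
    ultimately have "[v = int g ^ (i mod 3) * (int g ^ (i div 3))^3] (mod int p)"
      by (simp add: cong_sym)
    then show ?thesis by (intro exI[of _ "i mod 3"]) auto
  qed
  have noncube: "\<not>(\<exists>t. [int g = t^3] (mod int p))"
  proof
    assume "\<exists>t. [int g = t^3] (mod int p)"
    then obtain t where t: "[int g = t^3] (mod int p)" by blast
    have tnd: "\<not> int p dvd t"
    proof
      assume "int p dvd t"
      then have "int p dvd t^3" by (simp add: power3_eq_cube)
      then show False using gnd cong_dvd_iff[OF t] by blast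
    qed
    define m where "m = (p - 1) div 3"
    have m3: "3 * m = p - 1" unfolding m_def using p1 by presburger
    have "[int g ^ m = (t^3)^m] (mod int p)" using t by (rule cong_pow)
    moreover have "(t^3)^m = t^(p-1)" using m3 by (simp add: power_mult[symmetric])
    ultimately have "[int g ^ m = 1] (mod int p)" using fermat_int[OF p tnd] cong_trans by simp
    then have "[g ^ m = 1] (mod p)" by (metis cong_int_iff of_nat_1 of_nat_power)
    then have "ord p g dvd m" by (simp add: ord_divides')
    moreover have "m > 0" "m < p - 1" using m3 p1' p1 by presburger+
    ultimately show False using ordg by (metis dvd_imp_le not_le)
  qed
  show ?thesis using that gnd cover noncube by blast
qed


lemma dvd_cancel_unit: "prime p \<Longrightarrow> \<not> int p dvd d \<Longrightarrow> int p dvd d * x \<Longrightarrow> int p dvd x"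
  using prime_int_p prime_dvd_mult_iff by blast

lemma zero_mod_p:
  fixes b1 b2 b3 :: int
  assumes p: "prime p" and p3: "p \<noteq> 3"
    and n1: "\<not> int p dvd b1" and n2: "\<not> int p dvd b2" and n3: "\<not> int p dvd b3"
  shows "\<exists>X Y Z. (\<not> int p dvd X \<or> \<not> int p dvd Y \<or> \<not> int p dvd Z) \<and>
           int p dvd (b1 * X^3 + b2 * Y^3 + b3 * Z^3)"
proof -
  have np1: "\<not> int p dvd 1" using p by (cases "p = 1") auto
  obtain d where d: "[b1 * d = 1] (mod int p)" using inv_mod_prime p n1 by blast
  have dd: "int p dvd b1 * d - 1" using d by (simp add: cong_iff_dvd_diff)
  have dnd: "\<not> int p dvd d"
  proof
    assume "int p dvd d"
    then have "int p dvd b1 * d" by (rule dvd_mult)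
    then have "int p dvd b1 * d - (b1 * d - 1)" using dd by (rule dvd_diff)
    then show False using np1 by simp
  qed
  define \<beta> where "\<beta> = b2 * d"
  define \<gamma> where "\<gamma> = b3 * d"
  show ?thesis
  proof (cases "p mod 3 = 1")
    case False
    obtain t where t: "[t^3 = -b2 * d] (mod int p)" using cube_root_easy p p3 False by blast
    have "int p dvd t^3 - (-b2 * d)" using t by (simp add: cong_iff_dvd_diff)
    moreover have "(b1 * t^3 + b2 * 1^3 + b3 * 0^3) = b1 * (t^3 - (-b2 * d)) - b2 * (b1 * d - 1)"
      by (simp add: algebra_simps)
    ultimately have "int p dvd (b1 * t^3 + b2 * 1^3 + b3 * 0^3)" using dd
      by (metis dvd_diff dvd_mult)
    then show ?thesis using np1 by blast
  next
    case True
    obtain G where G: "\<not> int p dvd G"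
      "\<And>v. \<not> int p dvd v \<Longrightarrow> \<exists>l<3. \<exists>t. [v = G^l * t^3] (mod int p)"
      "\<not>(\<exists>t. [G = t^3] (mod int p))" using primroot_setup p True by blast
    note ctx = p G(1) G(2) G(3)
    have bn: "\<not> int p dvd \<beta>" "\<not> int p dvd \<gamma>" unfolding \<beta>_def \<gamma>_def using unit_mult p n2 n3 dnd by blast+
    obtain lb where lb: "lb < 3" "memb p G lb \<beta>" using memb_cover[OF ctx bn(1)] by blast
    obtain lc where lc: "lc < 3" "memb p G lc \<gamma>" using memb_cover[OF ctx bn(2)] by blast
    have m1: "memb p G 0 1" using memb_one[OF ctx] .
    consider "lb = 0" | "lc = 0" | "lb = lc" | "lb = 1 \<and> lc = 2" | "lb = 2 \<and> lc = 1"
      using lb lc by arith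
    then show ?thesis
    proof cases
      case 1
      then obtain u where u: "[\<beta> = 1 * u^3] (mod int p)" using memb_same[OF ctx] lb m1 by blast
      have "int p dvd \<beta> - u^3" using u by (simp add: cong_iff_dvd_diff)
      moreover have "d * (b1 * (-u)^3 + b2 * 1^3 + b3 * 0^3) = (\<beta> - u^3) - u^3 * (b1 * d - 1)"
        unfolding \<beta>_def by (simp add: algebra_simps)
      ultimately have "int p dvd d * (b1 * (-u)^3 + b2 * 1^3 + b3 * 0^3)" using dd
        by (metis dvd_diff dvd_mult)
      then have "int p dvd (b1 * (-u)^3 + b2 * 1^3 + b3 * 0^3)" using dvd_cancel_unit p dnd by blast
      then show ?thesis using np1 by blast
    next
      case 2
      then obtain u where u: "[\<gamma> = 1 * u^3] (mod int p)" using memb_same[OF ctx] lc m1 by blast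
      have "int p dvd \<gamma> - u^3" using u by (simp add: cong_iff_dvd_diff)
      moreover have "d * (b1 * (-u)^3 + b2 * 0^3 + b3 * 1^3) = (\<gamma> - u^3) - u^3 * (b1 * d - 1)"
        unfolding \<gamma>_def by (simp add: algebra_simps)
      ultimately have "int p dvd d * (b1 * (-u)^3 + b2 * 0^3 + b3 * 1^3)" using dd
        by (metis dvd_diff dvd_mult)
      then have "int p dvd (b1 * (-u)^3 + b2 * 0^3 + b3 * 1^3)" using dvd_cancel_unit p dnd by blast
      then show ?thesis using np1 by blast
    next
      case 3
      then obtain u where u: "[\<gamma> = \<beta> * u^3] (mod int p)" using memb_same[OF ctx] lc lb by blast
      have "int p dvd \<gamma> - \<beta> * u^3" using u by (simp add: cong_iff_dvd_diff)
      moreover have "d * (b1 * 0^3 + b2 * (-u)^3 + b3 * 1^3) = \<gamma> - \<beta> * u^3"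
        unfolding \<gamma>_def \<beta>_def by (simp add: algebra_simps)
      ultimately have "int p dvd d * (b1 * 0^3 + b2 * (-u)^3 + b3 * 1^3)" by simp
      then have "int p dvd (b1 * 0^3 + b2 * (-u)^3 + b3 * 1^3)" using dvd_cancel_unit p dnd by blast
      then show ?thesis using np1 by blast
    next
      case 4
      obtain v where v: "memb p G 1 v" "memb p G 2 (1 + v)" using exists_12[OF ctx] by blast
      obtain y where y: "[v = \<beta> * y^3] (mod int p)" using memb_same[OF ctx] v(1) lb 4 by blast
      obtain z where z: "[1 + v = \<gamma> * z^3] (mod int p)" using memb_same[OF ctx] v(2) lc 4 by blast
      have h1: "int p dvd v - \<beta> * y^3" using y by (simp add: cong_iff_dvd_diff)
      have h2: "int p dvd (1 + v) - \<gamma> * z^3" using z by (simp add: cong_iff_dvd_diff)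
      have "d * (b1 * 1^3 + b2 * y^3 + b3 * (-z)^3) = (b1 * d - 1) + ((1 + v) - \<gamma> * z^3) - (v - \<beta> * y^3)"
        unfolding \<gamma>_def \<beta>_def by (simp add: algebra_simps)
      then have "int p dvd d * (b1 * 1^3 + b2 * y^3 + b3 * (-z)^3)" using dd h1 h2
        by (metis dvd_diff dvd_add)
      then have "int p dvd (b1 * 1^3 + b2 * y^3 + b3 * (-z)^3)" using dvd_cancel_unit p dnd by blast
      then show ?thesis using np1 by blast
    next
      case 5
      obtain v where v: "memb p G 1 v" "memb p G 2 (1 + v)" using exists_12[OF ctx] by blast
      obtain z where z: "[v = \<gamma> * z^3] (mod int p)" using memb_same[OF ctx] v(1) lc 5 by blast
      obtain y where y: "[1 + v = \<beta> * y^3] (mod int p)" using memb_same[OF ctx] v(2) lb 5 by blast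
      have h1: "int p dvd v - \<gamma> * z^3" using z by (simp add: cong_iff_dvd_diff)
      have h2: "int p dvd (1 + v) - \<beta> * y^3" using y by (simp add: cong_iff_dvd_diff)
      have "d * (b1 * 1^3 + b2 * (-y)^3 + b3 * z^3) = (b1 * d - 1) + ((1 + v) - \<beta> * y^3) - (v - \<gamma> * z^3)"
        unfolding \<gamma>_def \<beta>_def by (simp add: algebra_simps)
      then have "int p dvd d * (b1 * 1^3 + b2 * (-y)^3 + b3 * z^3)" using dd h1 h2
        by (metis dvd_diff dvd_add)
      then have "int p dvd (b1 * 1^3 + b2 * (-y)^3 + b3 * z^3)" using dvd_cancel_unit p dnd by blast
      then show ?thesis using np1 by blast
    qed
  qed
qed




lemma hensel_cube:
  fixes b x c :: int
  assumes p: "prime p" "p \<noteq> 3" and nb: "\<not> int p dvd b" and nx: "\<not> int p dvd x"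
    and h: "int p dvd b * x^3 - c"
  shows "\<exists>y. int p dvd y - x \<and> int p ^ Suc N dvd b * y^3 - c"
proof (induction N)
  case 0
  then show ?case using h by (intro exI[of _ x]) simp
next
  case (Suc N)
  then obtain y where y1: "int p dvd y - x" and y2: "int p ^ Suc N dvd b * y^3 - c" by blast
  obtain e where e: "b * y^3 - c = int p ^ Suc N * e" using y2 by (auto elim: dvdE)
  have ny: "\<not> int p dvd y"
  proof
    assume "int p dvd y"
    then have "int p dvd y - (y - x)" using y1 by (rule dvd_diff)
    then show False using nx by simp
  qed
  define D where "D = 3 * b * y^2"
  have nD: "\<not> int p dvd D" unfolding D_def
    using unit_mult[OF p(1)] unit_pow[OF p(1) ny] not_p_dvd_3[OF p] nb by blast
  obtain d0 where d0: "[D * d0 = 1] (mod int p)" using inv_mod_prime p(1) nD by blast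
  have dd: "int p dvd D * d0 - 1" using d0 by (simp add: cong_iff_dvd_diff)
  define s where "s = - e * d0"
  define P where "P = int p ^ Suc N"
  define y' where "y' = y + P * s"
  have expand: "b * y'^3 - c = (b*y^3 - c) + D * P * s + (3*b*y*s^2) * P^2 + (b*s^3) * P^3"
    unfolding y'_def D_def by (simp add: algebra_simps power2_eq_square power3_eq_cube)
  have PS: "int p ^ Suc (Suc N) = P * int p" unfolding P_def by simp
  have P2: "P^2 = int p ^ Suc (Suc N) * int p ^ N"
  proof -
    have "P^2 = int p ^ (Suc N * 2)" unfolding P_def by (rule power_mult[symmetric])
    also have "Suc N * 2 = Suc (Suc N) + N" by simp
    finally show ?thesis by (metis power_add)
  qed
  have P3: "P^3 = int p ^ Suc (Suc N) * int p ^ (2 * N + 1)"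
  proof -
    have "P^3 = int p ^ (Suc N * 3)" unfolding P_def by (rule power_mult[symmetric])
    also have "Suc N * 3 = Suc (Suc N) + (2 * N + 1)" by simp
    finally show ?thesis by (metis power_add)
  qed
  have t1: "(b*y^3 - c) + D * P * s = - (P * e) * (D * d0 - 1)"
    unfolding s_def using e P_def by (simp add: algebra_simps)
  have d1: "int p ^ Suc (Suc N) dvd (b*y^3 - c) + D * P * s"
    unfolding t1 PS using dd by (simp add: mult_dvd_mono)
  have d2: "int p ^ Suc (Suc N) dvd (3*b*y*s^2) * P^2 + (b*s^3) * P^3"
    unfolding P2 P3 by (intro dvd_add) (simp_all add: dvd_mult)
  have "int p ^ Suc (Suc N) dvd b * y'^3 - c"
    unfolding expand using dvd_add[OF d1 d2] by (simp add: add.assoc)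
  moreover have "int p dvd y' - x"
  proof -
    have "int p dvd P * s" unfolding P_def by simp
    then have "int p dvd (y - x) + P * s" using y1 by (rule dvd_add[rotated])
    then show ?thesis unfolding y'_def by (simp add: algebra_simps)
  qed
  ultimately show ?case by blast
qed


lemma values_mod:
  fixes b1 b2 b3 w :: int
  assumes p: "prime p" "p \<noteq> 3"
    and n1: "\<not> int p dvd b1" and n2: "\<not> int p dvd b2" and n3: "\<not> int p dvd b3"
    and hw: "int p dvd w"
  shows "\<exists>X Y Z. int p ^ N dvd (b1 * X^3 + b2 * Y^3 + b3 * Z^3) - w"
proof -
  obtain X0 Y0 Z0 where u: "\<not> int p dvd X0 \<or> \<not> int p dvd Y0 \<or> \<not> int p dvd Z0"
    and z: "int p dvd (b1 * X0^3 + b2 * Y0^3 + b3 * Z0^3)"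
    using zero_mod_p[OF p n1 n2 n3] by blast
  have z': "int p dvd (b1 * X0^3 + b2 * Y0^3 + b3 * Z0^3) - w" using z hw by (rule dvd_diff)
  have pN: "int p ^ N dvd int p ^ Suc N" by (simp add: le_imp_power_dvd)
  from u consider "\<not> int p dvd X0" | "\<not> int p dvd Y0" | "\<not> int p dvd Z0" by blast
  then show ?thesis
  proof cases
    case 1
    have "int p dvd b1 * X0^3 - (w - b2 * Y0^3 - b3 * Z0^3)" using z' by (simp add: algebra_simps)
    then obtain X where "int p ^ Suc N dvd b1 * X^3 - (w - b2 * Y0^3 - b3 * Z0^3)"
      using hensel_cube[OF p n1 1] by blast
    then have "int p ^ Suc N dvd (b1 * X^3 + b2 * Y0^3 + b3 * Z0^3) - w" by (simp add: algebra_simps)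
    then show ?thesis using pN dvd_trans by blast
  next
    case 2
    have "int p dvd b2 * Y0^3 - (w - b1 * X0^3 - b3 * Z0^3)" using z' by (simp add: algebra_simps)
    then obtain Y where "int p ^ Suc N dvd b2 * Y^3 - (w - b1 * X0^3 - b3 * Z0^3)"
      using hensel_cube[OF p n2 2] by blast
    then have "int p ^ Suc N dvd (b1 * X0^3 + b2 * Y^3 + b3 * Z0^3) - w" by (simp add: algebra_simps)
    then show ?thesis using pN dvd_trans by blast
  next
    case 3
    have "int p dvd b3 * Z0^3 - (w - b1 * X0^3 - b2 * Y0^3)" using z' by (simp add: algebra_simps)
    then obtain Z where "int p ^ Suc N dvd b3 * Z^3 - (w - b1 * X0^3 - b2 * Y0^3)"
      using hensel_cube[OF p n3 3] by blast
    then have "int p ^ Suc N dvd (b1 * X0^3 + b2 * Y0^3 + b3 * Z^3) - w" by (simp add: algebra_simps)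
    then show ?thesis using pN dvd_trans by blast
  qed
qed

lemma padic_val_frac:
  fixes \<alpha> \<beta> :: int
  assumes p: "prime p" and a0: "\<alpha> \<noteq> 0" and b0: "\<beta> \<noteq> 0"
  shows "padic_val_rat p (of_int \<alpha> / of_int \<beta>) =
           int (multiplicity (int p) \<alpha>) - int (multiplicity (int p) \<beta>)"
proof -
  obtain a b where q: "quotient_of (of_int \<alpha> / of_int \<beta>) = (a, b)" by (cases "quotient_of (of_int \<alpha> / of_int \<beta>)") auto
  have bpos: "b > 0" using quotient_of_denom_pos[OF q] .
  have eq: "(of_int \<alpha> / of_int \<beta> :: rat) = of_int a / of_int b" using quotient_of_div[OF q] .
  then have "(of_int (\<alpha> * b) :: rat) = of_int (a * \<beta>)" using b0 bpos
    by (simp add: field_simps)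
  then have eq2: "\<alpha> * b = a * \<beta>" by (simp only: of_int_eq_iff)
  have a0': "a \<noteq> 0" using eq2 a0 bpos by auto
  have pp: "prime_elem (int p)" using p by (simp add: prime_nat_int_transfer)
  have "multiplicity (int p) (\<alpha> * b) = multiplicity (int p) (a * \<beta>)" using eq2 by simp
  then have "multiplicity (int p) \<alpha> + multiplicity (int p) b = multiplicity (int p) a + multiplicity (int p) \<beta>"
    using prime_elem_multiplicity_mult_distrib[OF pp] a0 a0' b0 bpos by simp
  then show ?thesis unfolding padic_val_rat_def q by simp
qed


lemma aux3: "(x::nat) \<le> S \<Longrightarrow> 3 * (S - x div 3) + x = 3 * S + x mod 3"
proof -
  assume "x \<le> S"
  moreover have "x div 3 \<le> x" by simp
  moreover have "x = 3 * (x div 3) + x mod 3" by simp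
  ultimately show ?thesis by linarith
qed

theorem corollary1p6:
  fixes p r :: nat and a :: "nat \<Rightarrow> int" and i j k :: nat
  assumes "prime p" and "p \<noteq> 3"
    and "1 \<le> i" and "i < j" and "j < k" and "k \<le> r"
    and "a i * a j * a k \<noteq> 0"
    and "multiplicity (int p) (a i) mod 3 = multiplicity (int p) (a j) mod 3"
    and "multiplicity (int p) (a j) mod 3 = multiplicity (int p) (a k) mod 3"
  shows "padic_dense p (ratio_set r (diag_cubic a r))"
proof -
  note p = assms(1,2)
  have ai: "a i \<noteq> 0" and aj: "a j \<noteq> 0" and ak: "a k \<noteq> 0" using assms(7) by auto
  have nu: "\<not> is_unit (int p)" using prime_gt_1_nat[OF p(1)] by simp
  have pp: "prime (int p)" using p by (simp add: prime_nat_int_transfer)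
  define vi where "vi = multiplicity (int p) (a i)"
  define vj where "vj = multiplicity (int p) (a j)"
  define vk where "vk = multiplicity (int p) (a k)"
  obtain bi where bi: "a i = int p ^ vi * bi" "\<not> int p dvd bi"
    unfolding vi_def using multiplicity_decompose'[OF ai nu] by metis
  obtain bj where bj: "a j = int p ^ vj * bj" "\<not> int p dvd bj"
    unfolding vj_def using multiplicity_decompose'[OF aj nu] by metis
  obtain bk where bk: "a k = int p ^ vk * bk" "\<not> int p dvd bk"
    unfolding vk_def using multiplicity_decompose'[OF ak nu] by metis
  define V where "V = 3 * (vi + vj + vk) + vi mod 3"
  define ei where "ei = vi + vj + vk - vi div 3"
  define ej where "ej = vi + vj + vk - vj div 3"
  define ek where "ek = vi + vj + vk - vk div 3"
  have mj: "vj mod 3 = vi mod 3" and mk: "vk mod 3 = vi mod 3"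
    using assms(8,9) unfolding vi_def vj_def vk_def by auto
  have Vi: "3 * ei + vi = V" unfolding ei_def V_def using aux3[of vi "vi + vj + vk"] by simp
  have Vj: "3 * ej + vj = V" unfolding ej_def V_def using mj aux3[of vj "vi + vj + vk"] by simp
  have Vk: "3 * ek + vk = V" unfolding ek_def V_def using mk aux3[of vk "vi + vj + vk"] by simp
  define F where "F = (\<lambda>X Y Z. bi * X^3 + bj * Y^3 + bk * Z^3)"
  define vec where "vec = (\<lambda>X Y Z. (\<lambda>l::nat. if l = i then int p ^ ei * X else if l = j then int p ^ ej * Y
      else if l = k then int p ^ ek * Z else 0))"
  have ijk: "i \<noteq> j" "i \<noteq> k" "j \<noteq> k" using assms(4,5) by auto
  have supp: "\<forall>l. l \<notin> {1..r} \<longrightarrow> vec X Y Z l = 0" for X Y Z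
    unfolding vec_def using assms(3-6) by auto
  have diag: "diag_cubic a r (vec X Y Z) = int p ^ V * F X Y Z" for X Y Z
  proof -
    have sub: "{i, j, k} \<subseteq> {1..r}" using assms(3-6) by auto
    have "diag_cubic a r (vec X Y Z) = (\<Sum>l\<in>{i,j,k}. a l * vec X Y Z l ^ 3)"
      unfolding diag_cubic_def
      by (rule sum.mono_neutral_right) (use sub in \<open>auto simp: vec_def\<close>)
    also have "\<dots> = a i * (int p ^ ei * X)^3 + a j * (int p ^ ej * Y)^3 + a k * (int p ^ ek * Z)^3"
      using ijk by (simp add: vec_def)
    also have "\<dots> = int p ^ (3 * ei + vi) * bi * X^3 + int p ^ (3 * ej + vj) * bj * Y^3
        + int p ^ (3 * ek + vk) * bk * Z^3"
      unfolding bi(1) bj(1) bk(1) by (simp add: power_mult_distrib power_add power_mult mult_ac)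
    also have "\<dots> = int p ^ V * F X Y Z" unfolding Vi Vj Vk F_def by (simp add: algebra_simps)
    finally show ?thesis .
  qed
  have pV: "int p ^ V \<noteq> 0" using p by (simp add: prime_gt_0_nat)
  have inR: "of_int (F X Y Z) / of_int (F X' Y' Z') \<in> ratio_set r (diag_cubic a r)"
    if "F X' Y' Z' \<noteq> 0" for X Y Z X' Y' Z'
  proof -
    have "diag_cubic a r (vec X' Y' Z') \<noteq> 0" using diag that pV by simp
    moreover have "(of_int (diag_cubic a r (vec X Y Z)) / of_int (diag_cubic a r (vec X' Y' Z')) :: rat)
        = of_int (F X Y Z) / of_int (F X' Y' Z')"
      using pV prime_gt_0_nat[OF p(1)] by (simp add: diag)
    ultimately have "\<exists>x y. (of_int (F X Y Z) / of_int (F X' Y' Z') :: rat) =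
        of_int (diag_cubic a r x) / of_int (diag_cubic a r y) \<and>
        (\<forall>l. l \<notin> {1..r} \<longrightarrow> x l = 0) \<and> (\<forall>l. l \<notin> {1..r} \<longrightarrow> y l = 0) \<and>
        diag_cubic a r y \<noteq> 0"
      using supp[of X Y Z] supp[of X' Y' Z'] by (intro exI[of _ "vec X Y Z"] exI[of _ "vec X' Y' Z'"]) simp
    then show ?thesis unfolding ratio_set_def by blast
  qed
  show ?thesis unfolding padic_dense_def
  proof (intro allI)
    fix q :: rat and n :: int
    obtain u w where qw: "quotient_of q = (u, w)" by (cases "quotient_of q") auto
    have wpos: "w > 0" using quotient_of_denom_pos[OF qw] .
    have qe: "q = of_int u / of_int w" using quotient_of_div[OF qw] .
    show "\<exists>s\<in>ratio_set r (diag_cubic a r). s = q \<or> n \<le> padic_val_rat p (s - q)"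
    proof (cases "u = 0")
      case True
      have "F 1 0 0 \<noteq> 0" unfolding F_def using bi(2) by auto
      then have "of_int (F 0 0 0) / of_int (F 1 0 0) \<in> ratio_set r (diag_cubic a r)" by (rule inR)
      moreover have "of_int (F 0 0 0) / of_int (F 1 0 0) = q" using True qe by (simp add: F_def)
      ultimately show ?thesis by blast
    next
      case False
      define mw where "mw = multiplicity (int p) w"
      define N where "N = nat n + 2 * mw + 2"
      obtain X1 Y1 Z1 where h1: "int p ^ N dvd F X1 Y1 Z1 - int p * u"
        unfolding F_def using values_mod[OF p bi(2) bj(2) bk(2), of "int p * u" N] by auto
      obtain X2 Y2 Z2 where h2: "int p ^ N dvd F X2 Y2 Z2 - int p * w"
        unfolding F_def using values_mod[OF p bi(2) bj(2) bk(2), of "int p * w" N] by auto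
      define A where "A = F X1 Y1 Z1"
      define B where "B = F X2 Y2 Z2"
      have w0: "w \<noteq> 0" using wpos by simp
      have notdvd: "\<not> int p ^ (mw + 2) dvd B"
      proof
        assume H: "int p ^ (mw + 2) dvd B"
        have "int p ^ (mw + 2) dvd int p ^ N" unfolding N_def by (simp add: le_imp_power_dvd)
        then have "int p ^ (mw + 2) dvd B - int p * w" using h2 unfolding B_def by (rule dvd_trans)
        then have "int p ^ (mw + 2) dvd B - (B - int p * w)" using H by (metis dvd_diff)
        then have "int p * int p ^ (mw + 1) dvd int p * w" by simp
        then have "int p ^ (mw + 1) dvd w" using p by (simp add: prime_gt_0_nat)
        then have "mw + 1 \<le> mw" unfolding mw_def using power_dvd_iff_le_multiplicity[OF w0 nu] by blast
        then show False by simp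
      qed
      have B0: "B \<noteq> 0" using notdvd by auto
      have mB: "multiplicity (int p) B \<le> mw + 1"
        using power_dvd_iff_le_multiplicity[OF B0 nu, of "mw + 2"] notdvd by simp
      define s where "s = (of_int A / of_int B :: rat)"
      have sR: "s \<in> ratio_set r (diag_cubic a r)" unfolding s_def A_def B_def using inR B0 B_def by blast
      show ?thesis
      proof (cases "s = q")
        case True
        then show ?thesis using sR by blast
      next
        case False
        define num where "num = A * w - u * B"
        have sq: "s - q = of_int num / of_int (B * w)"
          unfolding s_def qe num_def using B0 w0 by (simp add: field_simps)
        have num0: "num \<noteq> 0" using False sq by auto
        have "num = w * (A - int p * u) - u * (B - int p * w)" unfolding num_def by (simp add: algebra_simps)
        then have "int p ^ N dvd num" using h1 h2 unfolding A_def B_def by (metis dvd_diff dvd_mult)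
        then have mnum: "N \<le> multiplicity (int p) num" using power_dvd_iff_le_multiplicity[OF num0 nu] by blast
        have "multiplicity (int p) (B * w) = multiplicity (int p) B + mw"
          unfolding mw_def using prime_elem_multiplicity_mult_distrib[OF _ B0 w0] pp by simp
        moreover have "padic_val_rat p (s - q) = int (multiplicity (int p) num) - int (multiplicity (int p) (B * w))"
          unfolding sq using padic_val_frac[OF p(1) num0, of "B * w"] B0 w0 by simp
        ultimately have "padic_val_rat p (s - q) = int (multiplicity (int p) num) - int (multiplicity (int p) B + mw)"
          by simp
        also have "\<dots> \<ge> n" using mnum mB unfolding N_def by linarith
        finally show ?thesis using sR by blast
      qed
    qed
  qed
qed


end
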